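(* Let $p\in[1,\infty]$, let $\varphi_0,\varphi_1,\varphi$ be positive non-degenerate quasi-concave functions on $(0,\infty)$, let $\{\widetilde t_k\}$ be a discretizing sequence for $\varphi(\varphi_0,\varphi_1)$ and $\overline l_p=\big(l_p,\,l_p(1/\widetilde t_k)\big)$. Then $$\left((\overline l_p)_{\varphi_0,p},(\overline l_p)_{\varphi_1,p}\right)_{\varphi,p}=l_p\Big(\frac1{\varphi(\varphi_0,\varphi_1)(\widetilde t_i)}\Big).$$
   Context: A function $\psi:(0,\infty)\to(0,\infty)$ is non-degenerate quasi-concave if it is non-decreasing, $\psi(t)/t$ is non-increasing, and $\lim_{t\to0+}\psi(t)=\lim_{t\to\infty}\psi(t)/t=\lim_{t\to0+}t/\psi(t)=\lim_{t\to\infty}1/\psi(t)=0$. $\varphi(\varphi_0,\varphi_1)(t)=\varphi_0(t)\varphi(\varphi_1(t)/\varphi_0(t))$. A positive sequence is strongly increasing if $\inf_k a_{k+1}/a_k\ge2$, strongly decreasing if $\sup_k a_{k+1}/a_k\le1/2$. A strongly increasing $\{s_k\}_{k\in\mathbb Z}$ is a discretizing sequence for $\psi$ if $\{\psi(s_k)\}$ is strongly increasing, $\{\psi(s_k)/s_k\}$ is strongly decreasing, and $\mathbb Z=\mathbb Z_1\sqcup\mathbb Z_2$ with $\psi(s_{k+1})\le2\psi(s_k)$ for $k\in\mathbb Z_1$ and $\psi(s_k)/s_k\le2\psi(s_{k+1})/s_{k+1}$ for $k\in\mathbb Z_2$. For a Banach couple $\overline X$, $K(t,x;\overline X)=\inf_{x=x_0+x_1}(\|x_0\|_{X_0}+t\|x_1\|_{X_1})$,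 and $\overline X_{\psi,p}$ is the space of $x\in X_0+X_1$ with $\big(\sum_k(K(s_k,x;\overline X)/\psi(s_k))^p\big)^{1/p}<\infty$ (sup if $p=\infty$), $\{s_k\}$ a fixed discretizing sequence for $\psi$. For a positive weight $u$, $l_p(u)=\{a:\{a_iu_i\}\in l_p\}$ with norm $\|\{a_iu_i\}\|_{l_p}$. Sequences are indexed by $\mathbb Z$; equality means equal sets with equivalent norms. *)

theory Defs
  imports "HOL-Analysis.Analysis" "HOL-Library.Function_Algebras"
begin

definition nondeg_qc :: "(real \<Rightarrow> real) \<Rightarrow> bool" where
  "nondeg_qc \<psi> \<longleftrightarrow>
     (\<forall>t>0. \<psi> t > 0) \<and>
     (\<forall>s t. 0 < s \<longrightarrow> s \<le> t \<longrightarrow> \<psi> s \<le> \<psi> t) \<and>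
     (\<forall>s t. 0 < s \<longrightarrow> s \<le> t \<longrightarrow> \<psi> t / t \<le> \<psi> s / s) \<and>
     (\<psi> \<longlongrightarrow> 0) (at_right 0) \<and>
     ((\<lambda>t. \<psi> t / t) \<longlongrightarrow> 0) at_top \<and>
     ((\<lambda>t. t / \<psi> t) \<longlongrightarrow> 0) (at_right 0) \<and>
     ((\<lambda>t. 1 / \<psi> t) \<longlongrightarrow> 0) at_top"

definition comp_fun :: "(real \<Rightarrow> real) \<Rightarrow> (real \<Rightarrow> real) \<Rightarrow> (real \<Rightarrow> real) \<Rightarrow> real \<Rightarrow> real" where
  "comp_fun \<phi> \<phi>0 \<phi>1 t = \<phi>0 t * \<phi> (\<phi>1 t / \<phi>0 t)"

definition strongly_increasing :: "(int \<Rightarrow> real) \<Rightarrow> bool" where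
  "strongly_increasing a \<longleftrightarrow> (\<forall>k. a k > 0) \<and> (\<forall>k. a (k + 1) / a k \<ge> 2)"

definition strongly_decreasing :: "(int \<Rightarrow> real) \<Rightarrow> bool" where
  "strongly_decreasing a \<longleftrightarrow> (\<forall>k. a k > 0) \<and> (\<forall>k. a (k + 1) / a k \<le> 1 / 2)"

definition discretizing :: "(int \<Rightarrow> real) \<Rightarrow> (real \<Rightarrow> real) \<Rightarrow> bool" where
  "discretizing s \<psi> \<longleftrightarrow>
     strongly_increasing s \<and>
     strongly_increasing (\<lambda>k. \<psi> (s k)) \<and>
     strongly_decreasing (\<lambda>k. \<psi> (s k) / s k) \<and>
     (\<exists>Z1 Z2 :: int set. Z1 \<union> Z2 = UNIV \<and> Z1 \<inter> Z2 = {} \<and>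
        (\<forall>k\<in>Z1. \<psi> (s (k + 1)) \<le> 2 * \<psi> (s k)) \<and>
        (\<forall>k\<in>Z2. \<psi> (s k) / s k \<le> 2 * (\<psi> (s (k + 1)) / s (k + 1))))"

definition enn_powr :: "ennreal \<Rightarrow> real \<Rightarrow> ennreal" where
  "enn_powr x r = (if x = top then top else ennreal (enn2real x powr r))"

definition lp_enn :: "ennreal \<Rightarrow> (int \<Rightarrow> ennreal) \<Rightarrow> ennreal" where
  "lp_enn p f = (if p = top then (SUP k. f k)
     else enn_powr (\<integral>\<^sup>+ k. enn_powr (f k) (enn2real p) \<partial>count_space UNIV) (1 / enn2real p))"

text \<open>Norm of the weighted space l_p(u) (value top = not in the space).\<close>
definition lp_norm :: "ennreal \<Rightarrow> (int \<Rightarrow> real) \<Rightarrow> (int \<Rightarrow> real) \<Rightarrow> ennreal" where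
  "lp_norm p u a = lp_enn p (\<lambda>i. ennreal (\<bar>a i\<bar> * u i))"

definition Kfun :: "('a::plus \<Rightarrow> ennreal) \<Rightarrow> ('a \<Rightarrow> ennreal) \<Rightarrow> real \<Rightarrow> 'a \<Rightarrow> ennreal" where
  "Kfun N0 N1 t x = (INF z \<in> {(x0, x1). x0 + x1 = x}. N0 (fst z) + ennreal t * N1 (snd z))"

definition interp_norm :: "('a::plus \<Rightarrow> ennreal) \<Rightarrow> ('a \<Rightarrow> ennreal) \<Rightarrow> (real \<Rightarrow> real)
     \<Rightarrow> (int \<Rightarrow> real) \<Rightarrow> ennreal \<Rightarrow> 'a \<Rightarrow> ennreal" where
  "interp_norm N0 N1 \<psi> s p x = lp_enn p (\<lambda>k. Kfun N0 N1 (s k) x / ennreal (\<psi> (s k)))"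

text \<open>Equal sets with equivalent norms.\<close>
definition equiv_norms :: "('a \<Rightarrow> ennreal) \<Rightarrow> ('a \<Rightarrow> ennreal) \<Rightarrow> bool" where
  "equiv_norms N M \<longleftrightarrow> (\<exists>C::real. C > 0 \<and>
      (\<forall>x. N x \<le> ennreal C * M x \<and> M x \<le> ennreal C * N x))"

end

theory Submission
  imports Defs
begin

lemma enn_powr_ennreal: "0 \<le> a \<Longrightarrow> enn_powr (ennreal a) q = ennreal (a powr q)"
  by (simp add: enn_powr_def)

lemma enn_powr_top[simp]: "enn_powr top q = top"
  by (simp add: enn_powr_def)

lemma enn_powr_zero[simp]: "enn_powr 0 q = 0"
  by (simp add: enn_powr_def)

lemma enn_powr_inv:
  assumes "q > 0" shows "enn_powr (enn_powr x q) (1/q) = x"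
proof (cases "x = top")
  case True then show ?thesis by simp
next
  case False
  then obtain a where a: "x = ennreal a" "0 \<le> a" by (cases x) auto
  have "(a powr q) powr (1/q) = a" using assms a(2) by (simp add: powr_powr)
  then show ?thesis using a by (simp add: enn_powr_ennreal)
qed

lemma enn_powr_mono:
  assumes "q \<ge> 0" "x \<le> y" shows "enn_powr x q \<le> enn_powr y q"
proof (cases "y = top")
  case True then show ?thesis by simp
next
  case False
  then obtain b where b: "y = ennreal b" "0 \<le> b" by (cases y) auto
  with assms obtain a where a: "x = ennreal a" "0 \<le> a" "a \<le> b"
    by (cases x) (auto simp: ennreal_le_iff2 top_unique)
  then show ?thesis using b assms by (simp add: enn_powr_ennreal powr_mono2)
qed

lemma enn_powr_mult:
  assumes "q > 0" shows "enn_powr (x * y) q = enn_powr x q * enn_powr y q"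
proof (cases "x = top \<or> y = top")
  case True
  then show ?thesis
  proof
    assume xt: "x = top"
    show ?thesis
    proof (cases "y = 0")
      case True then show ?thesis using xt by simp
    next
      case False
      then have "enn_powr y q \<noteq> 0" using assms
        by (cases y) (auto simp: enn_powr_ennreal ennreal_eq_0_iff)
      then show ?thesis using xt False by (simp add: ennreal_mult_top ennreal_top_mult)
    qed
  next
    assume yt: "y = top"
    show ?thesis
    proof (cases "x = 0")
      case True then show ?thesis using yt by simp
    next
      case False
      then have "enn_powr x q \<noteq> 0" using assms
        by (cases x) (auto simp: enn_powr_ennreal ennreal_eq_0_iff)
      then show ?thesis using yt False by (simp add: ennreal_mult_top ennreal_top_mult)
    qed
  qed
next
  case False
  then obtain a b where ab: "x = ennreal a" "0 \<le> a" "y = ennreal b" "0 \<le> b"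
    by (cases x; cases y) auto
  then show ?thesis by (simp add: enn_powr_ennreal ennreal_mult[symmetric] powr_mult)
qed

lemma enn_powr_add_le:
  assumes "q > 0"
  shows "enn_powr (x + y) q \<le> ennreal (2 powr q) * (enn_powr x q + enn_powr y q)"
proof (cases "x = top \<or> y = top")
  case True
  then show ?thesis by (auto simp: ennreal_mult_top)
next
  case False
  then obtain a b where ab: "x = ennreal a" "0 \<le> a" "y = ennreal b" "0 \<le> b"
    by (cases x; cases y) auto
  have "(a + b) powr q \<le> (2 * max a b) powr q"
    using ab assms by (intro powr_mono2) auto
  also have "\<dots> = 2 powr q * max a b powr q" using ab by (simp add: powr_mult)
  also have "\<dots> \<le> 2 powr q * (a powr q + b powr q)"
    by (intro mult_left_mono) (auto simp: max_def)
  finally show ?thesis using ab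
    by (simp add: enn_powr_ennreal ennreal_plus[symmetric] ennreal_mult[symmetric] del: ennreal_plus)
qed


lemma q_ge1: assumes "1 \<le> p" "p \<noteq> top" shows "1 \<le> enn2real p"
  using assms by (cases p) auto

lemma lp_mono: assumes "\<And>k. f k \<le> g k" shows "lp_enn p f \<le> lp_enn p g"
proof (cases "p = top")
  case True then show ?thesis using assms by (simp add: lp_enn_def SUP_mono')
next
  case False
  have "(\<integral>\<^sup>+ k. enn_powr (f k) (enn2real p) \<partial>count_space UNIV) \<le>
        (\<integral>\<^sup>+ k. enn_powr (g k) (enn2real p) \<partial>count_space UNIV)"
    by (intro nn_integral_mono enn_powr_mono assms) auto
  then show ?thesis using False by (simp add: lp_enn_def enn_powr_mono)
qed

lemma lp_homog: assumes "1 \<le> p" shows "lp_enn p (\<lambda>k. c * f k) = c * lp_enn p f"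
proof (cases "p = top")
  case True then show ?thesis by (simp add: lp_enn_def SUP_mult_left_ennreal)
next
  case False
  define q where "q = enn2real p"
  have q: "q > 0" using q_ge1[OF assms False] q_def by simp
  have "lp_enn p (\<lambda>k. c * f k) = enn_powr (\<integral>\<^sup>+ k. enn_powr c q * enn_powr (f k) q \<partial>count_space UNIV) (1/q)"
    using False q by (simp add: lp_enn_def q_def enn_powr_mult)
  also have "\<dots> = enn_powr (enn_powr c q * (\<integral>\<^sup>+ k. enn_powr (f k) q \<partial>count_space UNIV)) (1/q)"
    by (subst nn_integral_cmult) auto
  also have "\<dots> = c * lp_enn p f"
    using False q by (simp add: lp_enn_def q_def enn_powr_mult enn_powr_inv)
  finally show ?thesis .
qed

lemma lp_point: assumes "1 \<le> p" shows "f k \<le> lp_enn p f"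
proof (cases "p = top")
  case True then show ?thesis by (simp add: lp_enn_def SUP_upper)
next
  case False
  define q where "q = enn2real p"
  have q: "q > 0" using q_ge1[OF assms False] q_def by simp
  have "enn_powr (f k) q \<le> (\<integral>\<^sup>+ k. enn_powr (f k) q \<partial>count_space UNIV)"
    by (rule nn_integral_ge_point) auto
  then have "enn_powr (enn_powr (f k) q) (1/q) \<le> enn_powr (\<integral>\<^sup>+ k. enn_powr (f k) q \<partial>count_space UNIV) (1/q)"
    by (rule enn_powr_mono[rotated]) (use q in auto)
  then show ?thesis using False q by (simp add: lp_enn_def q_def enn_powr_inv)
qed

lemma lp_fubini: assumes "1 \<le> p"
  shows "lp_enn p (\<lambda>k. lp_enn p (\<lambda>i. f k i)) = lp_enn p (\<lambda>i. lp_enn p (\<lambda>k. f k i))"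
proof (cases "p = top")
  case True then show ?thesis unfolding lp_enn_def using True by simp (rule SUP_commute)
next
  case False
  define q where "q = enn2real p"
  have q: "q > 0" using q_ge1[OF assms False] q_def by simp
  have inv2: "enn_powr (enn_powr x (1/q)) q = x" for x
    using enn_powr_inv[of "1/q" x] q by simp
  have "(\<integral>\<^sup>+ k. (\<integral>\<^sup>+ i. enn_powr (f k i) q \<partial>count_space UNIV) \<partial>count_space UNIV)
     = (\<integral>\<^sup>+ i. (\<integral>\<^sup>+ k. enn_powr (f k i) q \<partial>count_space UNIV) \<partial>count_space UNIV)"
    by (rule nn_integral_count_space_nn_integral) simp_all
  note swap = this
  have L: "lp_enn p h = enn_powr (\<integral>\<^sup>+ k. enn_powr (h k) q \<partial>count_space UNIV) (1/q)" for h
    using False by (simp add: lp_enn_def q_def)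
  show ?thesis unfolding L inv2 swap ..
qed

lemma lp_add: assumes "1 \<le> p"
  shows "lp_enn p (\<lambda>k. f k + g k) \<le> 4 * (lp_enn p f + lp_enn p g)"
proof (cases "p = top")
  case True
  have "(SUP k. f k + g k) \<le> (SUP k. f k) + (SUP k. g k)"
    by (rule SUP_least) (intro add_mono SUP_upper; simp)
  also have "\<dots> \<le> 4 * ((SUP k. f k) + (SUP k. g k))"
    by (rule order_trans[OF _ mult_right_mono[of 1 4]]) auto
  finally show ?thesis using True by (simp add: lp_enn_def)
next
  case False
  define q where "q = enn2real p"
  have q: "q \<ge> 1" using q_ge1[OF assms False] q_def by simp
  then have q0: "q > 0" by simp
  define F where "F = (\<integral>\<^sup>+ k. enn_powr (f k) q \<partial>count_space UNIV)"
  define G where "G = (\<integral>\<^sup>+ k. enn_powr (g k) q \<partial>count_space UNIV)"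
  have "(\<integral>\<^sup>+ k. enn_powr (f k + g k) q \<partial>count_space UNIV) \<le>
        (\<integral>\<^sup>+ k. ennreal (2 powr q) * (enn_powr (f k) q + enn_powr (g k) q) \<partial>count_space UNIV)"
    by (intro nn_integral_mono enn_powr_add_le q0)
  also have "\<dots> = ennreal (2 powr q) * (F + G)"
    unfolding F_def G_def by (subst nn_integral_cmult; simp add: nn_integral_add)
  finally have "lp_enn p (\<lambda>k. f k + g k) \<le> enn_powr (ennreal (2 powr q) * (F + G)) (1/q)"
    using False q0 by (simp add: lp_enn_def q_def[symmetric] enn_powr_mono)
  also have "\<dots> = 2 * enn_powr (F + G) (1/q)"
  proof -
    have "enn_powr (ennreal (2 powr q)) (1/q) = ennreal ((2 powr q) powr (1/q))"
      by (rule enn_powr_ennreal) simp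
    also have "(2 powr q) powr (1/q) = 2" using q0 by (simp add: powr_powr)
    finally have e: "enn_powr (ennreal (2 powr q)) (1/q) = 2" by simp
    have "enn_powr (ennreal (2 powr q) * (F+G)) (1/q) = enn_powr (ennreal (2 powr q)) (1/q) * enn_powr (F+G) (1/q)"
      by (rule enn_powr_mult) (use q0 in simp)
    then show ?thesis using e by simp
  qed
  also have "\<dots> \<le> 2 * (ennreal (2 powr (1/q)) * (enn_powr F (1/q) + enn_powr G (1/q)))"
    by (rule mult_left_mono[OF enn_powr_add_le]) (use q0 in auto)
  also have "\<dots> \<le> 2 * (2 * (enn_powr F (1/q) + enn_powr G (1/q)))"
  proof -
    have "2 powr (1/q) \<le> 2 powr 1" using q by (intro powr_mono) auto
    then have "ennreal (2 powr (1/q)) \<le> ennreal 2" by (intro ennreal_leI) simp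
    then have "ennreal (2 powr (1/q)) \<le> 2" by simp
    then show ?thesis by (intro mult_left_mono mult_right_mono) auto
  qed
  also have "\<dots> = 4 * (enn_powr F (1/q) + enn_powr G (1/q))"
    by (metis (no_types) mult.assoc[symmetric] mult_2 numeral_Bit0 one_add_one)
  also have "\<dots> = 4 * (lp_enn p f + lp_enn p g)"
    using False by (simp add: lp_enn_def q_def[symmetric] F_def G_def)
  finally show ?thesis .
qed


lemma ennreal_inv_cancel: "c > 0 \<Longrightarrow> ennreal (1/c) * (ennreal c * X) = X"
proof -
  assume c: "c > 0"
  have "ennreal (1/c) * ennreal c = ennreal 1" using c by (subst ennreal_mult[symmetric]) auto
  then show ?thesis by (simp add: mult.assoc[symmetric])
qed

lemma ennreal_inv_cancel2: "c > 0 \<Longrightarrow> ennreal c * (ennreal (1/c) * X) = X"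
proof -
  assume c: "c > 0"
  have "ennreal c * ennreal (1/c) = ennreal 1" using c by (subst ennreal_mult[symmetric]) auto
  then show ?thesis by (simp add: mult.assoc[symmetric])
qed

abbreviation Lmin :: "ennreal \<Rightarrow> (int \<Rightarrow> real) \<Rightarrow> (int \<Rightarrow> real) \<Rightarrow> real \<Rightarrow> (int \<Rightarrow> real) \<Rightarrow> ennreal" where
  "Lmin p w0 w1 t x \<equiv> lp_enn p (\<lambda>i. ennreal (\<bar>x i\<bar> * min (w0 i) (t * w1 i)))"

lemma K_upper:
  assumes p: "1 \<le> p" and t: "t \<ge> 0" and w0: "\<And>i. w0 i \<ge> 0" and w1: "\<And>i. w1 i \<ge> 0"
  shows "Kfun (lp_norm p w0) (lp_norm p w1) t x \<le> 2 * Lmin p w0 w1 t x"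
proof -
  define A where "A = {i. w0 i \<le> t * w1 i}"
  define x0 where "x0 = (\<lambda>i. if i \<in> A then x i else 0)"
  define x1 where "x1 = (\<lambda>i. if i \<in> A then 0 else x i)"
  have sum: "x0 + x1 = x" by (auto simp: fun_eq_iff x0_def x1_def)
  have "Kfun (lp_norm p w0) (lp_norm p w1) t x \<le> lp_norm p w0 x0 + ennreal t * lp_norm p w1 x1"
    unfolding Kfun_def by (rule INF_lower2[of "(x0, x1)"]) (use sum in auto)
  also have "lp_norm p w0 x0 \<le> Lmin p w0 w1 t x"
    unfolding lp_norm_def
    by (rule lp_mono, rule ennreal_leI) (use t w1 in \<open>auto simp: x0_def A_def min_def\<close>)
  also have "ennreal t * lp_norm p w1 x1 = lp_enn p (\<lambda>i. ennreal (t * (\<bar>x1 i\<bar> * w1 i)))"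
    unfolding lp_norm_def lp_homog[OF p, symmetric] using t by (simp add: ennreal_mult')
  also have "\<dots> \<le> Lmin p w0 w1 t x"
  proof (rule lp_mono, rule ennreal_leI)
    fix i
    show "t * (\<bar>x1 i\<bar> * w1 i) \<le> \<bar>x i\<bar> * min (w0 i) (t * w1 i)"
      using t w0[of i] w1[of i] by (auto simp: x1_def A_def min_def)
  qed
  finally show ?thesis by (simp add: mult_2)
qed

lemma K_lower:
  assumes p: "1 \<le> p" and t: "t \<ge> 0" and w0: "\<And>i. w0 i \<ge> 0" and w1: "\<And>i. w1 i \<ge> 0"
  shows "Lmin p w0 w1 t x \<le> 4 * Kfun (lp_norm p w0) (lp_norm p w1) t x"
proof -
  have key: "ennreal (1/4) * Lmin p w0 w1 t x \<le> Kfun (lp_norm p w0) (lp_norm p w1) t x"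
    unfolding Kfun_def
  proof (rule INF_greatest)
    fix z assume "z \<in> {(x0, x1). x0 + x1 = x}"
    then obtain a b where zab: "z = (a, b)" and ab: "x = a + b" by auto
    have "Lmin p w0 w1 t x \<le> lp_enn p (\<lambda>i. ennreal (\<bar>a i\<bar> * w0 i) + ennreal t * ennreal (\<bar>b i\<bar> * w1 i))"
    proof (rule lp_mono)
      fix i
      have "\<bar>x i\<bar> * min (w0 i) (t * w1 i) \<le> (\<bar>a i\<bar> + \<bar>b i\<bar>) * min (w0 i) (t * w1 i)"
        using ab w0[of i] w1[of i] t by (intro mult_right_mono) auto
      also have "\<dots> \<le> \<bar>a i\<bar> * w0 i + t * (\<bar>b i\<bar> * w1 i)"
      proof -
        have "\<bar>a i\<bar> * min (w0 i) (t * w1 i) \<le> \<bar>a i\<bar> * w0 i" by (intro mult_left_mono) auto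
        moreover have "\<bar>b i\<bar> * min (w0 i) (t * w1 i) \<le> \<bar>b i\<bar> * (t * w1 i)" by (intro mult_left_mono) auto
        ultimately show ?thesis by (simp add: distrib_right mult.left_commute)
      qed
      finally show "ennreal (\<bar>x i\<bar> * min (w0 i) (t * w1 i)) \<le> ennreal (\<bar>a i\<bar> * w0 i) + ennreal t * ennreal (\<bar>b i\<bar> * w1 i)"
        using t w0[of i] w1[of i] by (simp add: ennreal_plus[symmetric] ennreal_mult[symmetric] ennreal_leI del: ennreal_plus)
    qed
    also have "\<dots> \<le> 4 * (lp_norm p w0 a + ennreal t * lp_norm p w1 b)"
      unfolding lp_norm_def lp_homog[OF p, symmetric] by (rule lp_add[OF p])
    finally have "Lmin p w0 w1 t x \<le> 4 * (lp_norm p w0 a + ennreal t * lp_norm p w1 b)" .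
    then have "ennreal (1/4) * Lmin p w0 w1 t x \<le> ennreal (1/4) * (4 * (lp_norm p w0 a + ennreal t * lp_norm p w1 b))"
      by (rule mult_left_mono) simp
    also have "\<dots> = lp_norm p w0 a + ennreal t * lp_norm p w1 b"
      by (rule ennreal_inv_cancel[of 4, simplified])
    finally show "ennreal (1/4) * Lmin p w0 w1 t x \<le> lp_norm p w0 (fst z) + ennreal t * lp_norm p w1 (snd z)" by (simp add: zab)
  qed
  have "Lmin p w0 w1 t x = 4 * (ennreal (1/4) * Lmin p w0 w1 t x)"
    using ennreal_inv_cancel2[of 4] by simp
  also have "\<dots> \<le> 4 * Kfun (lp_norm p w0) (lp_norm p w1) t x"
    by (rule mult_left_mono[OF key]) simp
  finally show ?thesis .
qed


lemma K_transfer: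
  assumes C: "C > 0" and h0: "\<And>x. N0 x \<le> ennreal C * M0 x" and h1: "\<And>x. N1 x \<le> ennreal C * M1 x"
  shows "Kfun N0 N1 t x \<le> ennreal C * Kfun M0 M1 t x"
proof -
  have key: "ennreal (1/C) * Kfun N0 N1 t x \<le> Kfun M0 M1 t x"
    unfolding Kfun_def
  proof (rule INF_greatest)
    fix z assume z: "z \<in> {(x0, x1). x0 + x1 = x}"
    have "ennreal (1/C) * (INF z\<in>{(x0, x1). x0 + x1 = x}. N0 (fst z) + ennreal t * N1 (snd z))
        \<le> ennreal (1/C) * (N0 (fst z) + ennreal t * N1 (snd z))"
      by (intro mult_left_mono INF_lower z) simp
    also have "\<dots> \<le> ennreal (1/C) * (ennreal C * M0 (fst z) + ennreal t * (ennreal C * M1 (snd z)))"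
      by (intro mult_left_mono add_mono h0 h1) simp_all
    also have "ennreal C * M0 (fst z) + ennreal t * (ennreal C * M1 (snd z)) = ennreal C * (M0 (fst z) + ennreal t * M1 (snd z))"
      by (simp add: algebra_simps)
    also have "ennreal (1/C) * \<dots> = M0 (fst z) + ennreal t * M1 (snd z)"
      by (rule ennreal_inv_cancel[OF C])
    finally show "ennreal (1/C) * (INF z\<in>{(x0, x1). x0 + x1 = x}. N0 (fst z) + ennreal t * N1 (snd z))
        \<le> M0 (fst z) + ennreal t * M1 (snd z)" .
  qed
  have "Kfun N0 N1 t x = ennreal C * (ennreal (1/C) * Kfun N0 N1 t x)"
    by (rule ennreal_inv_cancel2[OF C, symmetric])
  also have "\<dots> \<le> ennreal C * Kfun M0 M1 t x"
    by (rule mult_left_mono[OF key]) simp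
  finally show ?thesis .
qed

lemma interp_transfer:
  assumes p: "1 \<le> p" and C: "C > 0" and h0: "\<And>x. N0 x \<le> ennreal C * M0 x" and h1: "\<And>x. N1 x \<le> ennreal C * M1 x"
  shows "interp_norm N0 N1 \<psi> s p x \<le> ennreal C * interp_norm M0 M1 \<psi> s p x"
  unfolding interp_norm_def lp_homog[OF p, symmetric]
proof (rule lp_mono)
  fix k
  have "Kfun N0 N1 (s k) x / ennreal (\<psi> (s k)) \<le> (ennreal C * Kfun M0 M1 (s k) x) / ennreal (\<psi> (s k))"
    by (intro divide_right_mono_ennreal K_transfer[OF C h0 h1])
  then show "Kfun N0 N1 (s k) x / ennreal (\<psi> (s k)) \<le> ennreal C * (Kfun M0 M1 (s k) x / ennreal (\<psi> (s k)))"
    by (simp add: ennreal_times_divide)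
qed

lemma equiv_norms_trans: "equiv_norms N M \<Longrightarrow> equiv_norms M L \<Longrightarrow> equiv_norms N L"
proof -
  assume "equiv_norms N M" "equiv_norms M L"
  then obtain C D where C: "C > 0" "\<And>x. N x \<le> ennreal C * M x \<and> M x \<le> ennreal C * N x"
    and D: "D > 0" "\<And>x. M x \<le> ennreal D * L x \<and> L x \<le> ennreal D * M x"
    unfolding equiv_norms_def by blast
  show ?thesis unfolding equiv_norms_def
  proof (intro exI[of _ "C * D"] conjI allI)
    show "C * D > 0" using C D by simp
    fix x
    have "N x \<le> ennreal C * M x" using C by blast
    also have "\<dots> \<le> ennreal C * (ennreal D * L x)" using D by (intro mult_left_mono) auto
    finally show "N x \<le> ennreal (C * D) * L x" using C D by (simp add: ennreal_mult mult.assoc)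
    have "L x \<le> ennreal D * M x" using D by blast
    also have "\<dots> \<le> ennreal D * (ennreal C * N x)" using C by (intro mult_left_mono) auto
    also have "\<dots> = ennreal (C * D) * N x" using C D by (simp add: ennreal_mult mult.assoc mult.left_commute)
    finally show "L x \<le> ennreal (C * D) * N x" .
  qed
qed

lemma equiv_interp:
  assumes p: "1 \<le> p" and e0: "equiv_norms N0 M0" and e1: "equiv_norms N1 M1"
  shows "equiv_norms (interp_norm N0 N1 \<psi> s p) (interp_norm M0 M1 \<psi> s p)"
proof -
  obtain C0 where C0: "C0 > 0" "\<And>x. N0 x \<le> ennreal C0 * M0 x \<and> M0 x \<le> ennreal C0 * N0 x"
    using e0 unfolding equiv_norms_def by blast
  obtain C1 where C1: "C1 > 0" "\<And>x. N1 x \<le> ennreal C1 * M1 x \<and> M1 x \<le> ennreal C1 * N1 x"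
    using e1 unfolding equiv_norms_def by blast
  define C where "C = max C0 C1"
  have C: "C > 0" using C0 C1 by (simp add: C_def)
  have le: "ennreal C0 \<le> ennreal C" "ennreal C1 \<le> ennreal C" by (auto simp: C_def intro!: ennreal_leI)
  have a: "N0 x \<le> ennreal C * M0 x" "M0 x \<le> ennreal C * N0 x" for x
    using C0(2)[of x] le by (meson mult_right_mono order_trans zero_le)+
  have b: "N1 x \<le> ennreal C * M1 x" "M1 x \<le> ennreal C * N1 x" for x
    using C1(2)[of x] le by (meson mult_right_mono order_trans zero_le)+
  show ?thesis unfolding equiv_norms_def
    by (intro exI[of _ C] conjI allI C interp_transfer[OF p C] a b)
qed


lemma si_step: "strongly_increasing a \<Longrightarrow> 2 * a k \<le> a (k + 1)"
  unfolding strongly_increasing_def by (metis le_divide_eq)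

lemma sd_step: "strongly_decreasing a \<Longrightarrow> 2 * a (k + 1) \<le> a k"
proof -
  assume "strongly_decreasing a"
  then have h: "a (k + 1) / a k \<le> 1/2" "a k > 0" unfolding strongly_decreasing_def by auto
  then have "a (k + 1) \<le> 1/2 * a k" by (simp add: divide_le_eq)
  then show ?thesis by linarith
qed

lemma si_pow: assumes "strongly_increasing a" shows "2^j * a k \<le> a (k + int j)"
proof (induction j)
  case 0 then show ?case by simp
next
  case (Suc j)
  have "2^Suc j * a k = 2 * (2^j * a k)" by simp
  also have "\<dots> \<le> 2 * a (k + int j)" using Suc by simp
  also have "\<dots> \<le> a (k + int j + 1)" by (rule si_step[OF assms])
  also have "k + int j + 1 = k + int (Suc j)" by simp
  finally show ?case .
qed

lemma sd_pow: assumes "strongly_decreasing a" shows "2^j * a (k + int j) \<le> a k"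
proof (induction j)
  case 0 then show ?case by simp
next
  case (Suc j)
  have e: "k + int (Suc j) = k + int j + 1" by simp
  have "2^Suc j * a (k + int (Suc j)) = 2^j * (2 * a (k + int j + 1))" unfolding e by simp
  also have "\<dots> \<le> 2^j * a (k + int j)" by (intro mult_left_mono sd_step[OF assms]) simp
  also have "\<dots> \<le> a k" by (rule Suc)
  finally show ?case .
qed

lemma bracket_aux: fixes s :: "int \<Rightarrow> real" shows "s a \<le> r \<Longrightarrow> r < s (a + int n) \<Longrightarrow> \<exists>m. s m \<le> r \<and> r < s (m + 1)"
proof (induction n arbitrary: a)
  case 0 then have "s a \<le> r" "r < s a" by simp_all
  then have False by linarith
  then show ?case ..
next
  case (Suc n)
  show ?case
  proof (cases "s (a + 1) \<le> r")
    case True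
    have "a + 1 + int n = a + int (Suc n)" by simp
    then have "r < s (a + 1 + int n)" using Suc.prems(2) by metis
    then show ?thesis using Suc.IH[OF True] by blast
  next
    case False then show ?thesis using Suc.prems(1) by force
  qed
qed

lemma bracket:
  assumes si: "strongly_increasing s" and r: "r > 0"
  shows "\<exists>m. s m \<le> r \<and> r < s (m + 1)"
proof -
  have s0: "s 0 > 0" using si unfolding strongly_increasing_def by auto
  obtain n1 :: nat where n1: "s 0 / r < 2 ^ n1" using real_arch_pow[of 2 "s 0 / r"] by auto
  obtain n2 :: nat where n2: "r / s 0 < 2 ^ n2" using real_arch_pow[of 2 "r / s 0"] by auto
  have "2^n1 * s (- int n1) \<le> s 0" using si_pow[OF si, of n1 "- int n1"] by simp
  moreover have "s 0 < 2^n1 * r" using n1 r by (simp add: divide_less_eq mult.commute)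
  ultimately have "2^n1 * s (- int n1) \<le> 2^n1 * r" by linarith
  then have a: "s (- int n1) \<le> r" by (simp add: mult_le_cancel_left_pos)
  have "2^n2 * s 0 \<le> s (int n2)" using si_pow[OF si, of n2 0] by simp
  moreover have "r < 2^n2 * s 0" using n2 s0 by (simp add: divide_less_eq mult.commute)
  ultimately have "r < s (int n2)" by linarith
  then have b: "r < s (- int n1 + int (n1 + n2))" by simp
  show ?thesis by (rule bracket_aux[OF a b])
qed


lemma geo_half_nat: "(\<integral>\<^sup>+ n. ennreal ((1/2::real) ^ n) \<partial>count_space (UNIV::nat set)) = 2"
proof -
  have "(\<integral>\<^sup>+ n. ennreal ((1/2::real) ^ n) \<partial>count_space (UNIV::nat set)) = (\<Sum>n. ennreal ((1/2::real) ^ n))"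
    by (rule nn_integral_count_space_nat)
  also have "\<dots> = ennreal (\<Sum>n. (1/2::real) ^ n)"
    by (rule suminf_ennreal2) (auto intro: summable_geometric)
  also have "(\<Sum>n. (1/2::real) ^ n) = 2" using suminf_geometric[of "1/2::real"] by simp
  finally show ?thesis by simp
qed

lemma geo_sum: "(\<integral>\<^sup>+ k. ennreal ((1/2::real) ^ nat \<bar>k - m\<bar>) \<partial>count_space (UNIV::int set)) \<le> 4"
proof -
  define f where "f = (\<lambda>k::int. ennreal ((1/2::real) ^ nat \<bar>k\<bar>))"
  have b1: "bij_betw (\<lambda>k::int. k - m) UNIV UNIV" by (rule bij_betwI[where g="\<lambda>k. k + m"]) auto
  have "(\<integral>\<^sup>+ k. ennreal ((1/2::real) ^ nat \<bar>k - m\<bar>) \<partial>count_space (UNIV::int set))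
      = (\<integral>\<^sup>+ k. f (k - m) \<partial>count_space UNIV)" by (simp add: f_def)
  also have "\<dots> = (\<integral>\<^sup>+ k. f k \<partial>count_space UNIV)" by (rule nn_integral_bij_count_space[OF b1])
  also have "\<dots> = (\<integral>\<^sup>+ k. f k * indicator {0..} k + f k * indicator {..<0} k \<partial>count_space UNIV)"
    by (intro nn_integral_cong) (auto simp: indicator_def)
  also have "\<dots> = (\<integral>\<^sup>+ k. f k * indicator {0..} k \<partial>count_space UNIV) + (\<integral>\<^sup>+ k. f k * indicator {..<0} k \<partial>count_space UNIV)"
    by (rule nn_integral_add) simp_all
  also have "(\<integral>\<^sup>+ k. f k * indicator {0..} k \<partial>count_space UNIV) = (\<integral>\<^sup>+ k. f k \<partial>count_space {0..})"
    by (rule nn_integral_count_space_indicator[symmetric]) simp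
  also have "\<dots> = (\<integral>\<^sup>+ n. f (int n) \<partial>count_space UNIV)"
    by (rule nn_integral_bij_count_space[symmetric]) (rule bij_betwI[where g=nat], auto)
  also have "\<dots> = 2" unfolding f_def using geo_half_nat by simp
  also have "(\<integral>\<^sup>+ k. f k * indicator {..<0} k \<partial>count_space UNIV) = (\<integral>\<^sup>+ k. f k \<partial>count_space {..<0})"
    by (rule nn_integral_count_space_indicator[symmetric]) simp
  also have "\<dots> = (\<integral>\<^sup>+ n. f (- int n - 1) \<partial>count_space UNIV)"
    by (rule nn_integral_bij_count_space[symmetric]) (rule bij_betwI[where g="\<lambda>k. nat (- k - 1)"], auto)
  also have "\<dots> \<le> (\<integral>\<^sup>+ n. ennreal ((1/2::real) ^ n) \<partial>count_space UNIV)"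
  proof (rule nn_integral_mono)
    fix n :: nat
    have "nat \<bar>- int n - 1\<bar> = Suc n" by simp
    then have "(1/2::real) ^ nat \<bar>- int n - 1\<bar> \<le> (1/2) ^ n" by (simp add: power_decreasing)
    then show "f (- int n - 1) \<le> ennreal ((1/2::real) ^ n)" unfolding f_def by (rule ennreal_leI)
  qed
  also have "\<dots> = 2" by (rule geo_half_nat)
  finally show ?thesis by simp
qed

lemma geo_lp: assumes p: "1 \<le> p"
  shows "lp_enn p (\<lambda>k. ennreal ((1/2::real) ^ nat \<bar>k - m\<bar>)) \<le> 4"
proof (cases "p = top")
  case True
  have "(SUP k. ennreal ((1/2::real) ^ nat \<bar>k - m\<bar>)) \<le> 4"
  proof (rule SUP_least)
    fix k :: int
    have "(1/2::real) ^ nat \<bar>k - m\<bar> \<le> 4"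
      by (rule order_trans[OF power_le_one]) auto
    then have "ennreal ((1/2::real) ^ nat \<bar>k - m\<bar>) \<le> ennreal 4" by (rule ennreal_leI)
    then show "ennreal ((1/2::real) ^ nat \<bar>k - m\<bar>) \<le> 4" by simp
  qed
  then show ?thesis using True by (simp add: lp_enn_def)
next
  case False
  define q where "q = enn2real p"
  have q: "q \<ge> 1" using q_ge1[OF p False] q_def by simp
  have "(\<integral>\<^sup>+ k. enn_powr (ennreal ((1/2::real) ^ nat \<bar>k - m\<bar>)) q \<partial>count_space UNIV)
      \<le> (\<integral>\<^sup>+ k. ennreal ((1/2::real) ^ nat \<bar>k - m\<bar>) \<partial>count_space UNIV)"
  proof (rule nn_integral_mono)
    fix k :: int
    have "((1/2::real) ^ nat \<bar>k - m\<bar>) powr q \<le> (1/2::real) ^ nat \<bar>k - m\<bar>"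
      using q by (intro powr_le_one_le) (auto intro: power_le_one)
    then show "enn_powr (ennreal ((1/2::real) ^ nat \<bar>k - m\<bar>)) q \<le> ennreal ((1/2::real) ^ nat \<bar>k - m\<bar>)"
      by (simp add: enn_powr_ennreal ennreal_leI)
  qed
  also have "\<dots> \<le> 4" by (rule geo_sum)
  finally have I: "(\<integral>\<^sup>+ k. enn_powr (ennreal ((1/2::real) ^ nat \<bar>k - m\<bar>)) q \<partial>count_space UNIV) \<le> 4" .
  have "lp_enn p (\<lambda>k. ennreal ((1/2::real) ^ nat \<bar>k - m\<bar>)) = enn_powr (\<integral>\<^sup>+ k. enn_powr (ennreal ((1/2::real) ^ nat \<bar>k - m\<bar>)) q \<partial>count_space UNIV) (1/q)"
    using False by (simp add: lp_enn_def q_def)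
  also have "\<dots> \<le> enn_powr 4 (1/q)" by (rule enn_powr_mono[OF _ I]) (use q in simp)
  also have "enn_powr 4 (1/q) = ennreal (4 powr (1/q))"
    using enn_powr_ennreal[of 4 "1/q"] by simp
  also have "\<dots> \<le> ennreal 4"
  proof (rule ennreal_leI)
    have "(4::real) powr (1/q) \<le> 4 powr 1" using q by (intro powr_mono) auto
    then show "(4::real) powr (1/q) \<le> 4" by simp
  qed
  finally show ?thesis by simp
qed


lemma disc_est:
  assumes pos: "\<And>t. t > 0 \<Longrightarrow> \<psi> t > 0"
    and mono: "\<And>a b. 0 < a \<Longrightarrow> a \<le> b \<Longrightarrow> \<psi> a \<le> \<psi> b"
    and quot: "\<And>a b. 0 < a \<Longrightarrow> a \<le> b \<Longrightarrow> \<psi> b / b \<le> \<psi> a / a"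
    and disc: "discretizing s \<psi>" and p: "1 \<le> p" and r: "r > 0"
  shows "ennreal (1 / \<psi> r) \<le> 2 * lp_enn p (\<lambda>k. ennreal (min 1 (s k / r) / \<psi> (s k)))"
    and "lp_enn p (\<lambda>k. ennreal (min 1 (s k / r) / \<psi> (s k))) \<le> 8 * ennreal (1 / \<psi> r)"
proof -
  define T where "T k = min 1 (s k / r) / \<psi> (s k)" for k
  have si: "strongly_increasing s" and sip: "strongly_increasing (\<lambda>k. \<psi> (s k))"
    and sdq: "strongly_decreasing (\<lambda>k. \<psi> (s k) / s k)"
    using disc unfolding discretizing_def by auto
  obtain Z1 Z2 where Z: "Z1 \<union> Z2 = UNIV" "\<And>k. k \<in> Z1 \<Longrightarrow> \<psi> (s (k + 1)) \<le> 2 * \<psi> (s k)"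
    "\<And>k. k \<in> Z2 \<Longrightarrow> \<psi> (s k) / s k \<le> 2 * (\<psi> (s (k + 1)) / s (k + 1))"
    using disc unfolding discretizing_def by blast
  have spos: "s k > 0" for k using si unfolding strongly_increasing_def by auto
  have ppos: "\<psi> (s k) > 0" for k using pos spos by auto
  have pr: "\<psi> r > 0" using pos r by auto
  obtain m where m: "s m \<le> r" "r < s (m + 1)" using bracket[OF si r] by blast
  have T0: "T k \<ge> 0" for k using spos[of k] ppos[of k] r by (simp add: T_def)
  have "\<exists>j. 1 / \<psi> r \<le> 2 * T j"
  proof (cases "m \<in> Z1")
    case True
    have "\<psi> (s (m + 1)) \<le> 2 * \<psi> (s m)" using Z(2)[OF True] .
    also have "\<psi> (s m) \<le> \<psi> r" using mono[OF spos m(1)] .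
    finally have h: "\<psi> (s (m + 1)) \<le> 2 * \<psi> r" by simp
    have "T (m + 1) = 1 / \<psi> (s (m + 1))" using m r by (simp add: T_def min_def)
    moreover have "1 / \<psi> r \<le> 2 * (1 / \<psi> (s (m + 1)))"
      using h pr ppos[of "m+1"] by (simp add: field_simps)
    ultimately have "1 / \<psi> r \<le> 2 * T (m + 1)" by simp
    then show ?thesis by blast
  next
    case False
    then have "m \<in> Z2" using Z(1) by auto
    then have "\<psi> (s m) / s m \<le> 2 * (\<psi> (s (m + 1)) / s (m + 1))" by (rule Z(3))
    also have "\<psi> (s (m + 1)) / s (m + 1) \<le> \<psi> r / r" using quot[OF r] m(2) by simp
    finally have h: "\<psi> (s m) / s m \<le> 2 * (\<psi> r / r)" by simp
    have "T m = (s m / r) / \<psi> (s m)" using m r spos[of m] by (simp add: T_def min_def)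
    moreover have "1 / \<psi> r \<le> 2 * ((s m / r) / \<psi> (s m))"
    proof -
      have "\<psi> (s m) * r \<le> 2 * \<psi> r * s m" using h spos[of m] r by (simp add: field_simps)
      then show ?thesis using pr ppos[of m] r spos[of m] by (simp add: field_simps)
    qed
    ultimately have "1 / \<psi> r \<le> 2 * T m" by simp
    then show ?thesis by blast
  qed
  then obtain j where j: "1 / \<psi> r \<le> 2 * T j" by blast
  have "ennreal (1 / \<psi> r) \<le> ennreal (2 * T j)" using j by (rule ennreal_leI)
  also have "\<dots> = 2 * ennreal (T j)" using T0[of j] by (simp add: ennreal_mult)
  also have "\<dots> \<le> 2 * lp_enn p (\<lambda>k. ennreal (T k))" by (intro mult_left_mono lp_point[OF p]) simp
  finally show "ennreal (1 / \<psi> r) \<le> 2 * lp_enn p (\<lambda>k. ennreal (min 1 (s k / r) / \<psi> (s k)))"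
    by (simp add: T_def)
  have up: "T k \<le> (2 / \<psi> r) * (1/2) ^ nat \<bar>k - m\<bar>" for k
  proof (cases "k > m")
    case True
    define j where "j = nat (k - m - 1)"
    have kj: "k = (m + 1) + int j" using True by (simp add: j_def)
    have "2^j * \<psi> (s (m + 1)) \<le> \<psi> (s k)" using si_pow[OF sip, of j "m+1"] kj by simp
    moreover have "\<psi> r \<le> \<psi> (s (m + 1))" using mono[OF r] m(2) by simp
    ultimately have h: "2^j * \<psi> r \<le> \<psi> (s k)" by (meson mult_left_mono order_trans zero_le_power zero_le_numeral)
    have "T k \<le> 1 / \<psi> (s k)" unfolding T_def using ppos[of k] by (intro divide_right_mono) auto
    also have "\<dots> \<le> 1 / (2^j * \<psi> r)" using h pr ppos[of k] by (intro divide_left_mono) auto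
    also have "\<dots> = (2 / \<psi> r) * (1/2) ^ nat \<bar>k - m\<bar>"
    proof -
      have "nat \<bar>k - m\<bar> = Suc j" using True by (simp add: j_def)
      then show ?thesis by (simp add: power_one_over field_simps)
    qed
    finally show ?thesis .
  next
    case False
    define j where "j = nat (m - k)"
    have mj: "m = k + int j" using False by (simp add: j_def)
    have "2^j * (\<psi> (s m) / s m) \<le> \<psi> (s k) / s k" using sd_pow[OF sdq, of j k] mj by simp
    moreover have "\<psi> r / r \<le> \<psi> (s m) / s m" using quot[OF spos m(1)] by simp
    ultimately have h: "2^j * (\<psi> r / r) \<le> \<psi> (s k) / s k" by (meson mult_left_mono order_trans zero_le_power zero_le_numeral)
    have "T k \<le> (s k / r) / \<psi> (s k)" unfolding T_def using ppos[of k] by (intro divide_right_mono) auto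
    also have "\<dots> = 1 / (r * (\<psi> (s k) / s k))" using spos[of k] by simp
    also have "\<dots> \<le> 1 / (r * (2^j * (\<psi> r / r)))"
      using h r pr ppos[of k] spos[of k] by (intro divide_left_mono mult_left_mono mult_pos_pos) auto
    also have "\<dots> = (1/2) ^ j / \<psi> r" using r by (simp add: power_one_over field_simps)
    also have "\<dots> \<le> (2 / \<psi> r) * (1/2) ^ nat \<bar>k - m\<bar>"
    proof -
      have "nat \<bar>k - m\<bar> = j" using False by (simp add: j_def)
      then show ?thesis using pr by (simp add: field_simps)
    qed
    finally show ?thesis .
  qed
  have "lp_enn p (\<lambda>k. ennreal (T k)) \<le> lp_enn p (\<lambda>k. ennreal (2 / \<psi> r) * ennreal ((1/2::real) ^ nat \<bar>k - m\<bar>))"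
  proof (rule lp_mono)
    fix k
    show "ennreal (T k) \<le> ennreal (2 / \<psi> r) * ennreal ((1/2::real) ^ nat \<bar>k - m\<bar>)"
      using up[of k] pr by (simp add: ennreal_mult[symmetric] ennreal_leI)
  qed
  also have "\<dots> = ennreal (2 / \<psi> r) * lp_enn p (\<lambda>k. ennreal ((1/2::real) ^ nat \<bar>k - m\<bar>))"
    by (rule lp_homog[OF p])
  also have "\<dots> \<le> ennreal (2 / \<psi> r) * 4" by (intro mult_left_mono geo_lp[OF p]) simp
  also have "\<dots> = 8 * ennreal (1 / \<psi> r)"
  proof -
    have "ennreal (2 / \<psi> r) * 4 = ennreal (2 / \<psi> r) * ennreal 4" by simp
    also have "\<dots> = ennreal (2 / \<psi> r * 4)" by (rule ennreal_mult[symmetric]) (use pr in auto)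
    also have "2 / \<psi> r * 4 = 8 * (1 / \<psi> r)" by simp
    also have "ennreal (8 * (1 / \<psi> r)) = ennreal 8 * ennreal (1 / \<psi> r)" by (rule ennreal_mult) (use pr in auto)
    finally show ?thesis by simp
  qed
  finally show "lp_enn p (\<lambda>k. ennreal (min 1 (s k / r) / \<psi> (s k))) \<le> 8 * ennreal (1 / \<psi> r)"
    by (simp add: T_def)
qed


lemma div_ennreal_pos: "c > 0 \<Longrightarrow> X / ennreal c = ennreal (1/c) * X"
  by (simp add: divide_ennreal_def inverse_ennreal mult.commute inverse_eq_divide)

lemma min_factor:
  fixes w0 w1 t :: real assumes "w0 > 0" "w1 > 0"
  shows "min w0 (t * w1) = w0 * min 1 (t / (w0 / w1))"
proof (cases "t * w1 \<le> w0")
  case True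
  then have "t / (w0 / w1) \<le> 1" using assms by (simp add: field_simps)
  then show ?thesis using True assms by (simp add: min_def field_simps)
next
  case False
  then have "\<not> t / (w0 / w1) \<le> 1" using assms by (simp add: field_simps)
  then show ?thesis using False assms by (simp add: min_def field_simps)
qed

lemma interp_weighted:
  assumes p: "1 \<le> p" and w0: "\<And>i. w0 i > 0" and w1: "\<And>i. w1 i > 0"
    and pos: "\<And>t. t > 0 \<Longrightarrow> \<psi> t > 0"
    and mono: "\<And>a b. 0 < a \<Longrightarrow> a \<le> b \<Longrightarrow> \<psi> a \<le> \<psi> b"
    and quot: "\<And>a b. 0 < a \<Longrightarrow> a \<le> b \<Longrightarrow> \<psi> b / b \<le> \<psi> a / a"
    and disc: "discretizing s \<psi>"
  shows "equiv_norms (interp_norm (lp_norm p w0) (lp_norm p w1) \<psi> s p) (lp_norm p (\<lambda>i. w0 i / \<psi> (w0 i / w1 i)))"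
proof -
  have spos: "s k > 0" for k using disc unfolding discretizing_def strongly_increasing_def by auto
  have ppos: "\<psi> (s k) > 0" for k using pos spos by auto
  have w0': "w0 i \<ge> 0" for i using w0[of i] by simp
  have w1': "w1 i \<ge> 0" for i using w1[of i] by simp
  have rpos: "w0 i / w1 i > 0" for i using w0[of i] w1[of i] by simp
  have bounds: "interp_norm (lp_norm p w0) (lp_norm p w1) \<psi> s p x \<le> ennreal 16 * lp_norm p (\<lambda>i. w0 i / \<psi> (w0 i / w1 i)) x \<and>
     lp_norm p (\<lambda>i. w0 i / \<psi> (w0 i / w1 i)) x \<le> ennreal 16 * interp_norm (lp_norm p w0) (lp_norm p w1) \<psi> s p x" for x
  proof -
    define K where "K k = Kfun (lp_norm p w0) (lp_norm p w1) (s k) x" for k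
    define L where "L k = Lmin p w0 w1 (s k) x" for k
    define F where "F k i = ennreal (\<bar>x i\<bar> * min (w0 i) (s k * w1 i) / \<psi> (s k))" for k i
    define G where "G i = lp_enn p (\<lambda>k. ennreal (min 1 (s k / (w0 i / w1 i)) / \<psi> (s k)))" for i
    define R where "R i = ennreal (\<bar>x i\<bar> * w0 i)" for i
    define Q where "Q i = ennreal (1 / \<psi> (w0 i / w1 i))" for i
    have LF: "L k / ennreal (\<psi> (s k)) = lp_enn p (F k)" for k
    proof -
      have "L k / ennreal (\<psi> (s k)) = ennreal (1 / \<psi> (s k)) * L k" using ppos[of k] by (rule div_ennreal_pos)
      also have "\<dots> = lp_enn p (\<lambda>i. ennreal (1 / \<psi> (s k)) * ennreal (\<bar>x i\<bar> * min (w0 i) (s k * w1 i)))"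
        unfolding L_def by (rule lp_homog[OF p, symmetric])
      also have "\<dots> = lp_enn p (F k)"
        unfolding F_def using ppos[of k] by (simp add: ennreal_mult[symmetric] w0' w1' spos less_imp_le)
      finally show ?thesis .
    qed
    have FG: "lp_enn p (\<lambda>k. F k i) = R i * G i" for i
    proof -
      have "F k i = R i * ennreal (min 1 (s k / (w0 i / w1 i)) / \<psi> (s k))" for k
      proof -
        have eq: "\<bar>x i\<bar> * min (w0 i) (s k * w1 i) / \<psi> (s k) = (\<bar>x i\<bar> * w0 i) * (min 1 (s k / (w0 i / w1 i)) / \<psi> (s k))"
          using min_factor[OF w0[of i] w1[of i], of "s k"] by simp
        show ?thesis unfolding F_def R_def eq by (rule ennreal_mult') (use w0'[of i] in simp)
      qed
      then show ?thesis unfolding G_def by (simp add: lp_homog[OF p])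
    qed
    have fub: "lp_enn p (\<lambda>k. lp_enn p (F k)) = lp_enn p (\<lambda>i. R i * G i)"
      using lp_fubini[OF p, of F] FG by simp
    have RQ: "lp_norm p (\<lambda>i. w0 i / \<psi> (w0 i / w1 i)) x = lp_enn p (\<lambda>i. R i * Q i)"
      unfolding lp_norm_def R_def Q_def
      by (rule arg_cong[where f="lp_enn p"], rule ext) (simp add: ennreal_mult[symmetric] w0' less_imp_le[OF pos[OF rpos]])
    have Gup: "G i \<le> 8 * Q i" and Glo: "Q i \<le> 2 * G i" for i
      using disc_est[OF pos mono quot disc p rpos[of i]] unfolding G_def Q_def by auto
    have up: "interp_norm (lp_norm p w0) (lp_norm p w1) \<psi> s p x \<le> 16 * lp_norm p (\<lambda>i. w0 i / \<psi> (w0 i / w1 i)) x"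
    proof -
      have "interp_norm (lp_norm p w0) (lp_norm p w1) \<psi> s p x = lp_enn p (\<lambda>k. K k / ennreal (\<psi> (s k)))"
        unfolding interp_norm_def K_def ..
      also have "\<dots> \<le> lp_enn p (\<lambda>k. 2 * (L k / ennreal (\<psi> (s k))))"
      proof (rule lp_mono)
        fix k
        have "K k / ennreal (\<psi> (s k)) \<le> (2 * L k) / ennreal (\<psi> (s k))"
          unfolding K_def L_def
          by (intro divide_right_mono_ennreal K_upper[OF p less_imp_le[OF spos] w0' w1'])
        then show "K k / ennreal (\<psi> (s k)) \<le> 2 * (L k / ennreal (\<psi> (s k)))" by (simp add: ennreal_times_divide)
      qed
      also have "\<dots> = 2 * lp_enn p (\<lambda>i. R i * G i)"
        by (simp add: lp_homog[OF p] LF fub)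
      also have "\<dots> \<le> 2 * lp_enn p (\<lambda>i. 8 * (R i * Q i))"
        by (intro mult_left_mono lp_mono) (auto simp: Gup mult.left_commute intro: mult_left_mono)
      also have "\<dots> = 16 * lp_enn p (\<lambda>i. R i * Q i)"
        unfolding lp_homog[OF p] by (simp add: mult.assoc[symmetric])
      finally show ?thesis using RQ by simp
    qed
    have lo: "lp_norm p (\<lambda>i. w0 i / \<psi> (w0 i / w1 i)) x \<le> 8 * interp_norm (lp_norm p w0) (lp_norm p w1) \<psi> s p x"
    proof -
      have "lp_norm p (\<lambda>i. w0 i / \<psi> (w0 i / w1 i)) x = lp_enn p (\<lambda>i. R i * Q i)" by (rule RQ)
      also have "\<dots> \<le> lp_enn p (\<lambda>i. 2 * (R i * G i))"
        by (intro lp_mono) (auto simp: Glo mult.left_commute intro: mult_left_mono)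
      also have "\<dots> = 2 * lp_enn p (\<lambda>k. L k / ennreal (\<psi> (s k)))"
        by (simp add: lp_homog[OF p] LF fub)
      also have "\<dots> \<le> 2 * lp_enn p (\<lambda>k. 4 * (K k / ennreal (\<psi> (s k))))"
      proof (intro mult_left_mono lp_mono)
        fix k
        have "L k / ennreal (\<psi> (s k)) \<le> (4 * K k) / ennreal (\<psi> (s k))"
          unfolding K_def L_def
          by (intro divide_right_mono_ennreal K_lower[OF p less_imp_le[OF spos] w0' w1'])
        then show "L k / ennreal (\<psi> (s k)) \<le> 4 * (K k / ennreal (\<psi> (s k)))" by (simp add: ennreal_times_divide)
      qed simp
      also have "\<dots> = 8 * interp_norm (lp_norm p w0) (lp_norm p w1) \<psi> s p x"
        by (simp add: lp_homog[OF p] mult.assoc[symmetric] interp_norm_def K_def)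
      finally show ?thesis .
    qed
    have "8 * interp_norm (lp_norm p w0) (lp_norm p w1) \<psi> s p x \<le> 16 * interp_norm (lp_norm p w0) (lp_norm p w1) \<psi> s p x"
      by (intro mult_right_mono) auto
    then show ?thesis using up lo by simp
  qed
  show ?thesis unfolding equiv_norms_def
    by (intro exI[of _ 16] conjI allI bounds) simp
qed


lemma nondeg_props:
  assumes "nondeg_qc \<psi>"
  shows "\<And>t. t > 0 \<Longrightarrow> \<psi> t > 0"
    and "\<And>a b. 0 < a \<Longrightarrow> a \<le> b \<Longrightarrow> \<psi> a \<le> \<psi> b"
    and "\<And>a b. 0 < a \<Longrightarrow> a \<le> b \<Longrightarrow> \<psi> b / b \<le> \<psi> a / a"
  using assms unfolding nondeg_qc_def by auto

theorem corollary3p6: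
  fixes p :: ennreal and \<phi>0 \<phi>1 \<phi> :: "real \<Rightarrow> real"
    and tt s0 s1 s :: "int \<Rightarrow> real"
  assumes "1 \<le> p"
    and "nondeg_qc \<phi>0" and "nondeg_qc \<phi>1" and "nondeg_qc \<phi>"
    and "discretizing tt (comp_fun \<phi> \<phi>0 \<phi>1)"
    and "discretizing s0 \<phi>0" and "discretizing s1 \<phi>1" and "discretizing s \<phi>"
  shows "equiv_norms
     (interp_norm
        (interp_norm (lp_norm p (\<lambda>_. 1)) (lp_norm p (\<lambda>i. 1 / tt i)) \<phi>0 s0 p)
        (interp_norm (lp_norm p (\<lambda>_. 1)) (lp_norm p (\<lambda>i. 1 / tt i)) \<phi>1 s1 p)
        \<phi> s p)
     (lp_norm p (\<lambda>i. 1 / comp_fun \<phi> \<phi>0 \<phi>1 (tt i)))"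
proof -
  note p = assms(1)
  have tpos: "tt i > 0" for i
    using assms(5) unfolding discretizing_def strongly_increasing_def by auto
  have f0: "\<phi>0 (tt i) > 0" for i using nondeg_props(1)[OF assms(2) tpos] .
  have f1: "\<phi>1 (tt i) > 0" for i using nondeg_props(1)[OF assms(3) tpos] .
  have E0: "equiv_norms (interp_norm (lp_norm p (\<lambda>_. 1)) (lp_norm p (\<lambda>i. 1 / tt i)) \<phi>0 s0 p)
      (lp_norm p (\<lambda>i. 1 / \<phi>0 (tt i)))"
    using interp_weighted[OF p _ _ nondeg_props[OF assms(2)] assms(6), of "\<lambda>_. 1" "\<lambda>i. 1 / tt i"] tpos
    by simp
  have E1: "equiv_norms (interp_norm (lp_norm p (\<lambda>_. 1)) (lp_norm p (\<lambda>i. 1 / tt i)) \<phi>1 s1 p)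
      (lp_norm p (\<lambda>i. 1 / \<phi>1 (tt i)))"
    using interp_weighted[OF p _ _ nondeg_props[OF assms(3)] assms(7), of "\<lambda>_. 1" "\<lambda>i. 1 / tt i"] tpos
    by simp
  have E2: "equiv_norms
     (interp_norm
        (interp_norm (lp_norm p (\<lambda>_. 1)) (lp_norm p (\<lambda>i. 1 / tt i)) \<phi>0 s0 p)
        (interp_norm (lp_norm p (\<lambda>_. 1)) (lp_norm p (\<lambda>i. 1 / tt i)) \<phi>1 s1 p)
        \<phi> s p)
     (interp_norm (lp_norm p (\<lambda>i. 1 / \<phi>0 (tt i))) (lp_norm p (\<lambda>i. 1 / \<phi>1 (tt i))) \<phi> s p)"
    by (rule equiv_interp[OF p E0 E1])
  have E3: "equiv_norms (interp_norm (lp_norm p (\<lambda>i. 1 / \<phi>0 (tt i))) (lp_norm p (\<lambda>i. 1 / \<phi>1 (tt i))) \<phi> s p)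
     (lp_norm p (\<lambda>i. (1 / \<phi>0 (tt i)) / \<phi> ((1 / \<phi>0 (tt i)) / (1 / \<phi>1 (tt i)))))"
    by (rule interp_weighted[OF p _ _ nondeg_props[OF assms(4)] assms(8)]) (use f0 f1 in simp_all)
  have W: "(\<lambda>i. (1 / \<phi>0 (tt i)) / \<phi> ((1 / \<phi>0 (tt i)) / (1 / \<phi>1 (tt i)))) = (\<lambda>i. 1 / comp_fun \<phi> \<phi>0 \<phi>1 (tt i))"
    by (rule ext) (simp add: comp_fun_def)
  show ?thesis using equiv_norms_trans[OF E2 E3] unfolding W .
qed

end
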